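(* Let $\delta,\varepsilon,\gamma\in\mathbb{R}$ with $\varepsilon\neq 0$, let $\{\alpha_j\}_{j\ge1}$, $\{\beta_j\}_{j\ge1}$ be bounded real sequences with all terms nonzero, and let $\{\lambda_j\}_{j\ge1}$ be a real sequence with $\lambda_j\to\infty$. Consider real sequences $\mathbf c=(c_1,c_2,\dots)$ satisfying $$(\delta-\lambda_1-\gamma\varepsilon)c_1+\alpha_1\varepsilon c_2=0,\qquad \beta_{j-1}\varepsilon c_{j-1}+(\delta-\lambda_j)c_j+\alpha_j\varepsilon c_{j+1}=0\quad (j\ge 2).$$ Then: (a) the set of such sequences is a one-dimensional real vector space, i.e. a solution is unique up to multiplication by a constant (and is determined by $c_1$); (b) if $\mathbf c$ is a nontrivial solution and $\mathbf c\in\ell^2$, then $\dfrac{c_j}{c_{j-1}}\sim\dfrac{\beta_{j-1}\varepsilon}{\lambda_j-\delta}$; if $\mathbf c$ is a nontrivial solution and $\mathbf c\notin\ell^2$, then $\dfrac{c_j}{c_{j-1}}\sim\dfrac{\lambda_{j-1}-\delta}{\alpha_{j-1}\varepsilon}$.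
   Context: $\ell^2$ denotes the space of real sequences $(x_1,x_2,\dots)$ with $\sum_j|x_j|^2<\infty$. The notation $a_j\sim b_j$ means $a_j/b_j\to1$ as $j\to\infty$. The system above is equivalent to the infinite matrix equation $T\mathbf c=0$ where $T$ is tridiagonal with diagonal $(\delta-\lambda_1-\gamma\varepsilon,\delta-\lambda_2,\delta-\lambda_3,\dots)$, superdiagonal $(\alpha_1\varepsilon,\alpha_2\varepsilon,\dots)$ and subdiagonal $(\beta_1\varepsilon,\beta_2\varepsilon,\dots)$. *)

theory Defs
  imports "HOL-Analysis.Analysis" "HOL-Library.Landau_Symbols"
begin

text \<open>Zero-based indexing: the paper's c_j, alpha_j, beta_j, lambda_j (j >= 1)
  are represented as c (j-1), a (j-1), b (j-1), lam (j-1).\<close>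

definition tri_solution ::
  "real \<Rightarrow> real \<Rightarrow> real \<Rightarrow> (nat \<Rightarrow> real) \<Rightarrow> (nat \<Rightarrow> real) \<Rightarrow> (nat \<Rightarrow> real) \<Rightarrow> (nat \<Rightarrow> real) \<Rightarrow> bool"
where
  "tri_solution \<delta> \<epsilon> \<gamma> a b lam c \<longleftrightarrow>
     (\<delta> - lam 0 - \<gamma> * \<epsilon>) * c 0 + a 0 * \<epsilon> * c 1 = 0 \<and>
     (\<forall>n\<ge>1. b (n - 1) * \<epsilon> * c (n - 1) + (\<delta> - lam n) * c n + a n * \<epsilon> * c (Suc n) = 0)"

end

theory Submission imports Defs begin


fun vseq :: "real \<Rightarrow> real \<Rightarrow> real \<Rightarrow> (nat\<Rightarrow>real) \<Rightarrow> (nat\<Rightarrow>real) \<Rightarrow> (nat\<Rightarrow>real) \<Rightarrow> nat \<Rightarrow> real" where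
  "vseq \<delta> e \<gamma> a b lam 0 = 1"
| "vseq \<delta> e \<gamma> a b lam (Suc 0) = -(\<delta> - lam 0 - \<gamma>*e)/(a 0 * e)"
| "vseq \<delta> e \<gamma> a b lam (Suc (Suc n)) = -(b n * e * vseq \<delta> e \<gamma> a b lam n + (\<delta> - lam (Suc n)) * vseq \<delta> e \<gamma> a b lam (Suc n))/(a (Suc n) * e)"

lemma tri_iff: "tri_solution \<delta> e \<gamma> a b lam c \<longleftrightarrow> (\<delta> - lam 0 - \<gamma>*e) * c 0 + a 0 * e * c 1 = 0 \<and>
   (\<forall>n. b n * e * c n + (\<delta> - lam (Suc n)) * c (Suc n) + a (Suc n) * e * c (Suc (Suc n)) = 0)"
  unfolding tri_solution_def
proof (intro iffI conjI allI impI; (elim conjE)?)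
  fix n assume "\<forall>n\<ge>1. b (n - 1) * e * c (n - 1) + (\<delta> - lam n) * c n + a n * e * c (Suc n) = 0"
  then show "b n * e * c n + (\<delta> - lam (Suc n)) * c (Suc n) + a (Suc n) * e * c (Suc (Suc n)) = 0"
    by (metis diff_Suc_1 le_add1 plus_1_eq_Suc)
next
  fix n :: nat assume h: "\<forall>n. b n * e * c n + (\<delta> - lam (Suc n)) * c (Suc n) + a (Suc n) * e * c (Suc (Suc n)) = 0" and "n \<ge> 1"
  then obtain m where "n = Suc m" by (cases n) auto
  then show "b (n - 1) * e * c (n - 1) + (\<delta> - lam n) * c n + a n * e * c (Suc n) = 0" using h by simp
qed auto

lemma sol_repr:
  assumes e: "e \<noteq> 0" and an: "\<forall>n. a n \<noteq> 0" and s: "tri_solution \<delta> e \<gamma> a b lam c"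
  shows "c = (\<lambda>n. c 0 * vseq \<delta> e \<gamma> a b lam n)"
proof -
  have i: "(\<delta> - lam 0 - \<gamma>*e) * c 0 + a 0 * e * c 1 = 0"
   and r: "\<And>n. b n * e * c n + (\<delta> - lam (Suc n)) * c (Suc n) + a (Suc n) * e * c (Suc (Suc n)) = 0"
    using s unfolding tri_iff by auto
  define t where "t = c 0"
  have "c n = t * vseq \<delta> e \<gamma> a b lam n \<and> c (Suc n) = t * vseq \<delta> e \<gamma> a b lam (Suc n)" for n
  proof (induction n)
    case 0
    have "a 0 * e \<noteq> 0" using e an by simp
    then show ?case using i unfolding t_def by (simp add: field_simps)
  next
    case (Suc n)
    have ne: "a (Suc n) * e \<noteq> 0" using e an by simp
    have "c (Suc (Suc n)) = -(b n * e * c n + (\<delta> - lam (Suc n)) * c (Suc n))/(a (Suc n) * e)"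
      using r[of n] ne by (simp add: field_simps)
    then show ?case using Suc by (simp add: field_simps)
  qed
  then show ?thesis unfolding t_def[symmetric] by (intro ext) simp
qed

lemma scaled_sol:
  assumes e: "e \<noteq> 0" and an: "\<forall>n. a n \<noteq> 0"
  shows "tri_solution \<delta> e \<gamma> a b lam (\<lambda>n. t * vseq \<delta> e \<gamma> a b lam n)"
  unfolding tri_iff
proof (intro conjI allI)
  have "a 0 * e \<noteq> 0" using e an by simp
  then show "(\<delta> - lam 0 - \<gamma> * e) * (t * vseq \<delta> e \<gamma> a b lam 0) + a 0 * e * (t * vseq \<delta> e \<gamma> a b lam 1) = 0"
    by (simp add: field_simps)
  fix n
  have "a (Suc n) * e \<noteq> 0" using e an by simp
  then show "b n * e * (t * vseq \<delta> e \<gamma> a b lam n) + (\<delta> - lam (Suc n)) * (t * vseq \<delta> e \<gamma> a b lam (Suc n)) +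
        a (Suc n) * e * (t * vseq \<delta> e \<gamma> a b lam (Suc (Suc n))) = 0"
    by (simp add: field_simps)
qed

lemma zero_pair:
  fixes a b c lam :: "nat \<Rightarrow> real" and e \<delta> :: real
  assumes r: "\<And>n. b n * e * c n + (\<delta> - lam (Suc n)) * c (Suc n) + a (Suc n) * e * c (Suc (Suc n)) = 0"
    and e: "e \<noteq> 0" and an: "\<forall>n. a n \<noteq> 0" and bn: "\<forall>n. b n \<noteq> 0"
    and z: "c k = 0" "c (Suc k) = 0"
  shows "c = (\<lambda>_. 0)"
proof -
  have "i \<le> k \<Longrightarrow> c (k - i) = 0 \<and> c (Suc (k - i)) = 0" for i
  proof (induction i)
    case (Suc i)
    define m where "m = k - Suc i"
    have m: "Suc m = k - i" using Suc.prems unfolding m_def by simp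
    have "c (Suc m) = 0" "c (Suc (Suc m)) = 0" using Suc m by auto
    with r[of m] have "b m * e * c m = 0" by simp
    then have "c m = 0" using e bn by simp
    then show ?case using \<open>c (Suc m) = 0\<close> m m_def by simp
  qed (use z in auto)
  from this[of k] have c01: "c 0 = 0" "c 1 = 0" by auto
  have "c n = 0 \<and> c (Suc n) = 0" for n
  proof (induction n)
    case (Suc n)
    with r[of n] have "a (Suc n) * e * c (Suc (Suc n)) = 0" by simp
    then show ?case using Suc e an by simp
  qed (use c01 in auto)
  then show ?thesis by auto
qed


lemma lim_aux:
  fixes lam :: "nat \<Rightarrow> real"
  assumes "filterlim lam at_top sequentially"
  shows "((\<lambda>k. C / (lam (k + j) - D)) \<longlongrightarrow> 0) sequentially"
proof -
  have "filterlim (\<lambda>k. lam (k + j)) at_top sequentially"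
    by (rule filterlim_compose[OF assms filterlim_add_const_nat_at_top])
  then have "filterlim (\<lambda>k. - D + lam (k + j)) at_top sequentially"
    by (rule filterlim_tendsto_add_at_top[OF tendsto_const])
  then have "filterlim (\<lambda>k. lam (k + j) - D) at_infinity sequentially"
    by (intro filterlim_at_top_imp_at_infinity) simp
  then show ?thesis by (rule tendsto_divide_0[OF tendsto_const])
qed

lemma tend1:
  fixes f g :: "nat \<Rightarrow> real"
  assumes "\<And>k. k \<ge> N \<Longrightarrow> \<bar>f k - 1\<bar> \<le> g k" "(g \<longlongrightarrow> 0) sequentially"
  shows "(f \<longlongrightarrow> 1) sequentially"
proof -
  have "((\<lambda>k. f k - 1) \<longlongrightarrow> 0) sequentially"
    by (rule Lim_null_comparison[OF _ assms(2)]) (use assms(1) in \<open>auto simp: eventually_sequentially\<close>)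
  then show ?thesis by (simp add: LIM_zero_iff)
qed


lemma dom:
  fixes a b c lam :: "nat \<Rightarrow> real" and e \<delta> M :: real
  assumes r: "\<And>n. b n * e * c n + (\<delta> - lam (Suc n)) * c (Suc n) + a (Suc n) * e * c (Suc (Suc n)) = 0"
    and Mpos: "M > 0" and Ma: "\<And>n. \<bar>a n\<bar> * \<bar>e\<bar> \<le> M" and Mb: "\<And>n. \<bar>b n\<bar> * \<bar>e\<bar> \<le> M"
    and an: "\<forall>n. a n \<noteq> 0" and e: "e \<noteq> 0"
    and N: "\<And>n. n \<ge> N \<Longrightarrow> lam n - \<delta> \<ge> 4*M"
    and lim: "filterlim lam at_top sequentially"
    and m: "m \<ge> N" "\<bar>c m\<bar> < \<bar>c (Suc m)\<bar>"
  shows "\<not> summable (\<lambda>n. (c n)\<^sup>2) \<and> (\<lambda>n. c (Suc n) / c n) \<sim>[sequentially] (\<lambda>n. (lam n - \<delta>) / (a n * e))"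
proof -
  have grow: "\<bar>c (Suc k)\<bar> < \<bar>c (Suc (Suc k))\<bar>" if k: "k \<ge> N" "\<bar>c k\<bar> < \<bar>c (Suc k)\<bar>" for k
  proof -
    have eq: "a (Suc k) * e * c (Suc (Suc k)) = (lam (Suc k) - \<delta>) * c (Suc k) - b k * e * c k"
      using r[of k] by (simp add: algebra_simps)
    have L: "lam (Suc k) - \<delta> \<ge> 4*M" using N k by simp
    have c1: "\<bar>c (Suc k)\<bar> > 0" using k by linarith
    have t1: "\<bar>a (Suc k) * e * c (Suc (Suc k))\<bar> \<ge> (lam (Suc k) - \<delta>) * \<bar>c (Suc k)\<bar> - \<bar>b k * e * c k\<bar>"
    proof -
      have "\<bar>(lam (Suc k) - \<delta>) * c (Suc k)\<bar> = (lam (Suc k) - \<delta>) * \<bar>c (Suc k)\<bar>"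
        using L Mpos by (simp add: abs_mult)
      then show ?thesis unfolding eq by (smt (verit) abs_triangle_ineq4)
    qed
    have t2: "\<bar>b k * e * c k\<bar> \<le> M * \<bar>c (Suc k)\<bar>"
    proof -
      have "\<bar>b k * e * c k\<bar> = (\<bar>b k\<bar> * \<bar>e\<bar>) * \<bar>c k\<bar>" by (simp add: abs_mult)
      also have "\<dots> \<le> M * \<bar>c (Suc k)\<bar>" using Mb[of k] k(2) Mpos
        by (intro mult_mono) auto
      finally show ?thesis .
    qed
    have t3: "\<bar>a (Suc k) * e * c (Suc (Suc k))\<bar> \<le> M * \<bar>c (Suc (Suc k))\<bar>"
    proof -
      have "\<bar>a (Suc k) * e * c (Suc (Suc k))\<bar> = (\<bar>a (Suc k)\<bar> * \<bar>e\<bar>) * \<bar>c (Suc (Suc k))\<bar>" by (simp add: abs_mult)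
      also have "\<dots> \<le> M * \<bar>c (Suc (Suc k))\<bar>" using Ma[of "Suc k"]
        by (intro mult_right_mono) auto
      finally show ?thesis .
    qed
    have t4: "(lam (Suc k) - \<delta>) * \<bar>c (Suc k)\<bar> \<ge> 4*M * \<bar>c (Suc k)\<bar>"
      using L by (intro mult_right_mono) auto
    have "M * \<bar>c (Suc (Suc k))\<bar> \<ge> M * (3 * \<bar>c (Suc k)\<bar>)" using t1 t2 t3 t4 by linarith
    then have "\<bar>c (Suc (Suc k))\<bar> \<ge> 3 * \<bar>c (Suc k)\<bar>" using Mpos by simp
    then show ?thesis using c1 by linarith
  qed
  have G: "\<bar>c k\<bar> < \<bar>c (Suc k)\<bar>" if "k \<ge> m" for k
    using that
  proof (induction k rule: dec_induct)
    case base then show ?case using m by simp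
  next
    case (step k) then show ?case using \<open>m \<ge> N\<close> grow by simp
  qed
  have mono: "\<bar>c (Suc m)\<bar> \<le> \<bar>c k\<bar>" if "k \<ge> Suc m" for k
    using that
  proof (induction k rule: dec_induct)
    case (step k) then show ?case using G[of k] by simp
  qed simp
  have cpos: "\<bar>c (Suc m)\<bar> > 0" using m by linarith
  have ns: "\<not> summable (\<lambda>n. (c n)\<^sup>2)"
  proof
    assume "summable (\<lambda>n. (c n)\<^sup>2)"
    then have "(\<lambda>n. (c n)\<^sup>2) \<longlonglongrightarrow> 0" by (rule summable_LIMSEQ_zero)
    moreover have "(c (Suc m))\<^sup>2 > 0" using cpos by simp
    ultimately have "eventually (\<lambda>n. (c n)\<^sup>2 < (c (Suc m))\<^sup>2) sequentially"
      by (rule order_tendstoD(2))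
    then obtain K where K: "\<And>n. n \<ge> K \<Longrightarrow> (c n)\<^sup>2 < (c (Suc m))\<^sup>2"
      by (auto simp: eventually_sequentially)
    have "(c (Suc m))\<^sup>2 \<le> (c (max K (Suc m)))\<^sup>2"
      using mono[of "max K (Suc m)"] by (simp add: abs_le_square_iff)
    with K[of "max K (Suc m)"] show False by simp
  qed
  have as: "(\<lambda>n. c (Suc n) / c n) \<sim>[sequentially] (\<lambda>n. (lam n - \<delta>) / (a n * e))"
  proof (rule asymp_equivI', rule tend1[where N="Suc m"])
    show "(\<lambda>k. M / (lam (k + 0) - \<delta>)) \<longlonglongrightarrow> 0" by (rule lim_aux[OF lim])
    fix k assume k: "Suc m \<le> k"
    then obtain j where kj: "k = Suc j" and j: "j \<ge> m" by (cases k) auto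
    have eq: "a k * e * c (Suc k) = (lam k - \<delta>) * c k - b j * e * c j"
      using r[of j] kj by (simp add: algebra_simps)
    have L: "lam k - \<delta> \<ge> 4*M" using N k m by simp
    have Gj: "\<bar>c j\<bar> < \<bar>c k\<bar>" using G[OF j] kj by simp
    have ck: "c k \<noteq> 0" using Gj by linarith
    have ak: "a k \<noteq> 0" using an by simp
    have Lp: "lam k - \<delta> > 0" using L Mpos by linarith
    have fk: "c (Suc k) / c k / ((lam k - \<delta>) / (a k * e)) - 1 = - (b j * e * c j) / ((lam k - \<delta>) * c k)"
    proof -
      have "c (Suc k) / c k / ((lam k - \<delta>) / (a k * e)) = (a k * e * c (Suc k)) / ((lam k - \<delta>) * c k)"
        using ck ak e Lp by (simp add: field_simps)
      also have "\<dots> = 1 - (b j * e * c j) / ((lam k - \<delta>) * c k)"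
        unfolding eq using ck Lp by (simp add: field_simps)
      finally show ?thesis by simp
    qed
    have "\<bar>b j * e * c j\<bar> \<le> M * \<bar>c k\<bar>"
    proof -
      have "\<bar>b j * e * c j\<bar> = (\<bar>b j\<bar> * \<bar>e\<bar>) * \<bar>c j\<bar>" by (simp add: abs_mult)
      also have "\<dots> \<le> M * \<bar>c k\<bar>" using Mb[of j] Gj Mpos by (intro mult_mono) auto
      finally show ?thesis .
    qed
    then have "\<bar>b j * e * c j\<bar> / ((lam k - \<delta>) * \<bar>c k\<bar>) \<le> M * \<bar>c k\<bar> / ((lam k - \<delta>) * \<bar>c k\<bar>)"
      using Lp ck by (intro divide_right_mono) auto
    also have "\<dots> = M / (lam k - \<delta>)" using ck by simp
    finally show "\<bar>c (Suc k) / c k / ((lam k - \<delta>) / (a k * e)) - 1\<bar> \<le> M / (lam (k + 0) - \<delta>)"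
      unfolding fk using Lp by (simp add: abs_mult abs_divide)
  qed
  from ns as show ?thesis by blast
qed


lemma recs:
  fixes a b c lam :: "nat \<Rightarrow> real" and e \<delta> M :: real
  assumes r: "\<And>n. b n * e * c n + (\<delta> - lam (Suc n)) * c (Suc n) + a (Suc n) * e * c (Suc (Suc n)) = 0"
    and Mpos: "M > 0" and Ma: "\<And>n. \<bar>a n\<bar> * \<bar>e\<bar> \<le> M" and Mb: "\<And>n. \<bar>b n\<bar> * \<bar>e\<bar> \<le> M"
    and an: "\<forall>n. a n \<noteq> 0" and bn: "\<forall>n. b n \<noteq> 0" and e: "e \<noteq> 0"
    and N: "\<And>n. n \<ge> N \<Longrightarrow> lam n - \<delta> \<ge> 4*M"
    and lim: "filterlim lam at_top sequentially"
    and dec: "\<And>k. k \<ge> N \<Longrightarrow> \<bar>c (Suc k)\<bar> \<le> \<bar>c k\<bar>"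
    and nz: "c \<noteq> (\<lambda>_. 0)"
  shows "summable (\<lambda>n. (c n)\<^sup>2) \<and> (\<lambda>n. c (Suc n) / c n) \<sim>[sequentially] (\<lambda>n. b n * e / (lam (Suc n) - \<delta>))"
proof -
  have B1: "(lam (Suc k) - \<delta> - M) * \<bar>c (Suc k)\<bar> \<le> \<bar>b k * e * c k\<bar>" if k: "k \<ge> N" for k
  proof -
    have eq: "(lam (Suc k) - \<delta>) * c (Suc k) = b k * e * c k + a (Suc k) * e * c (Suc (Suc k))"
      using r[of k] by (simp add: algebra_simps)
    have L: "lam (Suc k) - \<delta> \<ge> 4*M" using N k by simp
    have "\<bar>(lam (Suc k) - \<delta>) * c (Suc k)\<bar> = (lam (Suc k) - \<delta>) * \<bar>c (Suc k)\<bar>"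
      using L Mpos by (simp add: abs_mult)
    moreover have "\<bar>a (Suc k) * e * c (Suc (Suc k))\<bar> \<le> M * \<bar>c (Suc k)\<bar>"
    proof -
      have "\<bar>a (Suc k) * e * c (Suc (Suc k))\<bar> = (\<bar>a (Suc k)\<bar> * \<bar>e\<bar>) * \<bar>c (Suc (Suc k))\<bar>" by (simp add: abs_mult)
      also have "\<dots> \<le> M * \<bar>c (Suc k)\<bar>" using Ma[of "Suc k"] dec[of "Suc k"] k Mpos
        by (intro mult_mono) auto
      finally show ?thesis .
    qed
    ultimately show ?thesis unfolding eq by (smt (verit) abs_triangle_ineq left_diff_distrib)
  qed
  have B2: "3*M * \<bar>c (Suc k)\<bar> \<le> \<bar>b k * e * c k\<bar>" if k: "k \<ge> N" for k
  proof -
    have L: "lam (Suc k) - \<delta> - M \<ge> 3*M" using N[of "Suc k"] k by simp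
    have "3*M * \<bar>c (Suc k)\<bar> \<le> (lam (Suc k) - \<delta> - M) * \<bar>c (Suc k)\<bar>"
      using L by (intro mult_right_mono) auto
    with B1[OF k] show ?thesis by linarith
  qed
  have Bb: "\<bar>b k * e * c k\<bar> \<le> M * \<bar>c k\<bar>" for k
  proof -
    have "\<bar>b k * e * c k\<bar> = (\<bar>b k\<bar> * \<bar>e\<bar>) * \<bar>c k\<bar>" by (simp add: abs_mult)
    also have "\<dots> \<le> M * \<bar>c k\<bar>" using Mb[of k] by (intro mult_right_mono) auto
    finally show ?thesis .
  qed
  have B3: "\<bar>c (Suc k)\<bar> \<le> \<bar>c k\<bar> / 3" if k: "k \<ge> N" for k
  proof -
    have "M * (3 * \<bar>c (Suc k)\<bar>) \<le> M * \<bar>c k\<bar>" using B2[OF k] Bb[of k] by linarith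
    then have "3 * \<bar>c (Suc k)\<bar> \<le> \<bar>c k\<bar>" using Mpos by simp
    then show ?thesis by simp
  qed
  have sm: "summable (\<lambda>n. (c n)\<^sup>2)"
  proof (rule summable_ratio_test[where c="1/9" and N=N])
    fix n assume n: "n \<ge> N"
    have "\<bar>c (Suc n)\<bar>\<^sup>2 \<le> (\<bar>c n\<bar> / 3)\<^sup>2" using B3[OF n] by (intro power_mono) auto
    then show "norm ((c (Suc n))\<^sup>2) \<le> 1/9 * norm ((c n)\<^sup>2)" by (simp add: power_divide)
  qed simp
  have cnz: "c k \<noteq> 0" if k: "k \<ge> N" for k
  proof
    assume "c k = 0"
    moreover then have "c (Suc k) = 0" using dec[OF k] by simp
    ultimately have "c = (\<lambda>_. 0)" by (rule zero_pair[OF r e an bn])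
    with nz show False by simp
  qed
  have as: "(\<lambda>n. c (Suc n) / c n) \<sim>[sequentially] (\<lambda>n. b n * e / (lam (Suc n) - \<delta>))"
  proof (rule asymp_equivI', rule tend1[where N="N"])
    show "(\<lambda>k. M / 3 / (lam (k + 2) - (\<delta> + M))) \<longlonglongrightarrow> 0" by (rule lim_aux[OF lim])
    fix k assume k: "N \<le> k"
    have L1: "lam (Suc k) - \<delta> \<ge> 4*M" using N k by simp
    have L2: "lam (Suc (Suc k)) - \<delta> \<ge> 4*M" using N k by simp
    have ck: "c k \<noteq> 0" using cnz k by simp
    have bk: "b k \<noteq> 0" using bn by simp
    have eq: "(lam (Suc k) - \<delta>) * c (Suc k) = b k * e * c k + a (Suc k) * e * c (Suc (Suc k))"
      using r[of k] by (simp add: algebra_simps)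
    have fk: "c (Suc k) / c k / (b k * e / (lam (Suc k) - \<delta>)) - 1 = (a (Suc k) * e * c (Suc (Suc k))) / (b k * e * c k)"
    proof -
      have "c (Suc k) / c k / (b k * e / (lam (Suc k) - \<delta>)) = ((lam (Suc k) - \<delta>) * c (Suc k)) / (b k * e * c k)"
        using ck bk e L1 Mpos by (simp add: field_simps)
      also have "\<dots> = 1 + (a (Suc k) * e * c (Suc (Suc k))) / (b k * e * c k)"
        unfolding eq using ck bk e by (simp add: field_simps)
      finally show ?thesis by simp
    qed
    define X where "X = \<bar>a (Suc k) * e * c (Suc (Suc k))\<bar>"
    define Y where "Y = \<bar>b k * e * c k\<bar>"
    define D where "D = lam (Suc (Suc k)) - \<delta> - M"
    have Yp: "Y > 0" using ck bk e unfolding Y_def by simp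
    have Dp: "D \<ge> 3*M" using L2 unfolding D_def by simp
    have X1: "X \<le> M * \<bar>c (Suc (Suc k))\<bar>"
    proof -
      have "X = (\<bar>a (Suc k)\<bar> * \<bar>e\<bar>) * \<bar>c (Suc (Suc k))\<bar>" unfolding X_def by (simp add: abs_mult)
      also have "\<dots> \<le> M * \<bar>c (Suc (Suc k))\<bar>" using Ma[of "Suc k"] by (intro mult_right_mono) auto
      finally show ?thesis .
    qed
    have c2: "D * \<bar>c (Suc (Suc k))\<bar> \<le> M * \<bar>c (Suc k)\<bar>"
      using B1[of "Suc k"] Bb[of "Suc k"] k unfolding D_def by simp
    have "X * D \<le> M * \<bar>c (Suc (Suc k))\<bar> * D" using X1 Dp Mpos by (intro mult_right_mono) auto
    also have "\<dots> = M * (D * \<bar>c (Suc (Suc k))\<bar>)" by simp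
    also have "\<dots> \<le> M * (M * \<bar>c (Suc k)\<bar>)" using c2 Mpos by (intro mult_left_mono) auto
    finally have XD: "X * D \<le> M * (M * \<bar>c (Suc k)\<bar>)" .
    have "M * (3 * M * \<bar>c (Suc k)\<bar>) \<le> M * Y" using B2[OF k] Mpos unfolding Y_def by (intro mult_left_mono) auto
    with XD have key: "3 * (X * D) \<le> M * Y" by (simp add: algebra_simps)
    have Dp': "D > 0" using Dp Mpos by linarith
    have "X / Y \<le> M / 3 / D" using key Yp Dp' by (simp add: field_simps)
    moreover have "\<bar>c (Suc k) / c k / (b k * e / (lam (Suc k) - \<delta>)) - 1\<bar> = X / Y"
      unfolding fk X_def Y_def by (rule abs_divide)
    moreover have "lam (k + 2) - (\<delta> + M) = D" unfolding D_def by simp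
    ultimately show "\<bar>c (Suc k) / c k / (b k * e / (lam (Suc k) - \<delta>)) - 1\<bar> \<le> M / 3 / (lam (k + 2) - (\<delta> + M))"
      by simp
  qed
  from sm as show ?thesis by blast
qed


theorem corollary3p3:
  fixes \<delta> \<epsilon> \<gamma> :: real and a b lam :: "nat \<Rightarrow> real"
  assumes "\<epsilon> \<noteq> 0"
    and "Bseq a" and "Bseq b"
    and "\<forall>n. a n \<noteq> 0" and "\<forall>n. b n \<noteq> 0"
    and "filterlim lam at_top sequentially"
  shows "(\<exists>v. tri_solution \<delta> \<epsilon> \<gamma> a b lam v \<and> v \<noteq> (\<lambda>_. 0) \<and>
            {c. tri_solution \<delta> \<epsilon> \<gamma> a b lam c} = {(\<lambda>n. t * v n) | t. True})
       \<and> (\<forall>c d. tri_solution \<delta> \<epsilon> \<gamma> a b lam c \<longrightarrow> tri_solution \<delta> \<epsilon> \<gamma> a b lam d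
              \<longrightarrow> c 0 = d 0 \<longrightarrow> c = d)
       \<and> (\<forall>c. tri_solution \<delta> \<epsilon> \<gamma> a b lam c \<and> c \<noteq> (\<lambda>_. 0) \<and> summable (\<lambda>n. (c n)\<^sup>2)
              \<longrightarrow> (\<lambda>n. c (Suc n) / c n) \<sim>[sequentially] (\<lambda>n. b n * \<epsilon> / (lam (Suc n) - \<delta>)))
       \<and> (\<forall>c. tri_solution \<delta> \<epsilon> \<gamma> a b lam c \<and> c \<noteq> (\<lambda>_. 0) \<and> \<not> summable (\<lambda>n. (c n)\<^sup>2)
              \<longrightarrow> (\<lambda>n. c (Suc n) / c n) \<sim>[sequentially] (\<lambda>n. (lam n - \<delta>) / (a n * \<epsilon>)))"
proof -
  note e = assms(1) and an = assms(4) and bn = assms(5) and lim = assms(6)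
  define v where "v = vseq \<delta> \<epsilon> \<gamma> a b lam"
  have P1: "\<exists>v. tri_solution \<delta> \<epsilon> \<gamma> a b lam v \<and> v \<noteq> (\<lambda>_. 0) \<and>
            {c. tri_solution \<delta> \<epsilon> \<gamma> a b lam c} = {(\<lambda>n. t * v n) | t. True}"
  proof (intro exI conjI)
    show "tri_solution \<delta> \<epsilon> \<gamma> a b lam v"
      using scaled_sol[OF e an, of \<delta> \<gamma> b lam 1] unfolding v_def by simp
    show "v \<noteq> (\<lambda>_. 0)"
    proof
      assume "v = (\<lambda>_. 0)"
      then have "v 0 = 0" by simp
      then show False unfolding v_def by simp
    qed
    show "{c. tri_solution \<delta> \<epsilon> \<gamma> a b lam c} = {(\<lambda>n. t * v n) | t. True}"
    proof (intro equalityI subsetI)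
      fix c assume "c \<in> {c. tri_solution \<delta> \<epsilon> \<gamma> a b lam c}"
      then have "c = (\<lambda>n. c 0 * v n)" using sol_repr[OF e an] unfolding v_def by blast
      then show "c \<in> {(\<lambda>n. t * v n) | t. True}" by blast
    next
      fix c assume "c \<in> {(\<lambda>n. t * v n) | t. True}"
      then show "c \<in> {c. tri_solution \<delta> \<epsilon> \<gamma> a b lam c}"
        using scaled_sol[OF e an] unfolding v_def by blast
    qed
  qed
  have P2: "\<forall>c d. tri_solution \<delta> \<epsilon> \<gamma> a b lam c \<longrightarrow> tri_solution \<delta> \<epsilon> \<gamma> a b lam d
              \<longrightarrow> c 0 = d 0 \<longrightarrow> c = d"
  proof (intro allI impI)
    fix c d assume "tri_solution \<delta> \<epsilon> \<gamma> a b lam c" "tri_solution \<delta> \<epsilon> \<gamma> a b lam d" "c 0 = d 0"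
    then show "c = d" using sol_repr[OF e an, of \<delta> \<gamma> b lam c] sol_repr[OF e an, of \<delta> \<gamma> b lam d] by simp
  qed
  obtain Ka where Ka: "Ka > 0" "\<forall>n. norm (a n) \<le> Ka" using assms(2) by (rule BseqE)
  obtain Kb where Kb: "Kb > 0" "\<forall>n. norm (b n) \<le> Kb" using assms(3) by (rule BseqE)
  define M where "M = max Ka Kb * \<bar>\<epsilon>\<bar>"
  have Mpos: "M > 0" unfolding M_def using Ka Kb e by simp
  have Ma: "\<bar>a n\<bar> * \<bar>\<epsilon>\<bar> \<le> M" for n
    unfolding M_def using Ka(2) by (intro mult_right_mono) (auto intro: order.trans[OF _ max.cobounded1])
  have Mb: "\<bar>b n\<bar> * \<bar>\<epsilon>\<bar> \<le> M" for n
    unfolding M_def using Kb(2) by (intro mult_right_mono) (auto intro: order.trans[OF _ max.cobounded2])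
  have "eventually (\<lambda>n. \<delta> + 4*M \<le> lam n) sequentially"
    using lim unfolding filterlim_at_top by blast
  then obtain N where N0: "\<And>n. n \<ge> N \<Longrightarrow> \<delta> + 4*M \<le> lam n" by (auto simp: eventually_sequentially)
  have N: "\<And>n. n \<ge> N \<Longrightarrow> lam n - \<delta> \<ge> 4*M" using N0 by fastforce
  have dich: "(\<not> summable (\<lambda>n. (c n)\<^sup>2) \<and> (\<lambda>n. c (Suc n) / c n) \<sim>[sequentially] (\<lambda>n. (lam n - \<delta>) / (a n * \<epsilon>)))
     \<or> (summable (\<lambda>n. (c n)\<^sup>2) \<and> (\<lambda>n. c (Suc n) / c n) \<sim>[sequentially] (\<lambda>n. b n * \<epsilon> / (lam (Suc n) - \<delta>)))"
    if s: "tri_solution \<delta> \<epsilon> \<gamma> a b lam c" and nz: "c \<noteq> (\<lambda>_. 0)" for c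
  proof -
    have r: "\<And>n. b n * \<epsilon> * c n + (\<delta> - lam (Suc n)) * c (Suc n) + a (Suc n) * \<epsilon> * c (Suc (Suc n)) = 0"
      using s unfolding tri_iff by blast
    show ?thesis
    proof (cases "\<exists>m\<ge>N. \<bar>c m\<bar> < \<bar>c (Suc m)\<bar>")
      case True
      then obtain m where "m \<ge> N" "\<bar>c m\<bar> < \<bar>c (Suc m)\<bar>" by blast
      from dom[OF r Mpos Ma Mb an e N lim this] show ?thesis by blast
    next
      case False
      then have dec: "\<And>k. k \<ge> N \<Longrightarrow> \<bar>c (Suc k)\<bar> \<le> \<bar>c k\<bar>" by (meson not_less)
      from recs[OF r Mpos Ma Mb an bn e N lim dec nz] show ?thesis by blast
    qed
  qed
  show ?thesis using P1 P2 dich by blast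
qed

end
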